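(* Let $\alpha \in (\frac12,1)$ have regular continued fraction expansion $\alpha = [1,a_1,a_2,a_3,\ldots]$. If $m := \min\{ i \ge 0 : T_\alpha^i(\alpha) \in D_\alpha^{\mathsf c}\}$ exists, then $m = a_1 + a_3 + \cdots + a_{2j+1} - 1$, where $j \ge 0$ is the unique integer such that \[ a_1+a_3+\cdots+a_{2j-1} - 1 < m \le a_1 + a_3 + \cdots + a_{2j+1} - 1. \] Similarly, if $k := \min\{ i \ge 0 : T_\alpha^i(1-\alpha) \in D_\alpha^{\mathsf c}\}$ exists, then $k = a_2+a_4+\cdots+a_{2j}-1$, where $j\ge1$ is the unique integer such that \[ a_2+a_4+\cdots+a_{2j-2}-1 < k \le a_2+a_4+\cdots+a_{2j}-1. \]
   Context: $[a_1,a_2,\ldots]$ denotes the regular continued fraction $\cfrac{1}{a_1+\cfrac{1}{a_2+\cdots}}$; empty sums are $0$. For $\alpha \in (0,1)$ let $D_\alpha = \bigcup_{n \ge 1} \big[ \frac{1}{n+\alpha}, \frac1n \big]$, $D_\alpha^{\mathsf c} = [0,1]\setminus D_\alpha$, $I_\alpha = [\min\{\alpha,1-\alpha\},1]$, and $T_\alpha : I_\alpha \to I_\alpha$, $T_\alpha(x) = \frac1x - \lfloor \frac1x \rfloor$ if $x \in D_\alpha^{\mathsf c}$, $T_\alpha(x) = 1 + \lfloor \frac1x \rfloor - \frac1x$ if $x \in D_\alpha$. *)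

theory Defs
  imports Complex_Main
begin

fun cfrac_list :: "nat list \<Rightarrow> real" where
  "cfrac_list [] = 0"
| "cfrac_list (b # bs) = 1 / (real b + cfrac_list bs)"

text \<open>alpha = [1, a_1, a_2, ...] (infinite regular continued fraction, a_i positive integers):
  the convergents [1, a_1, ..., a_n] tend to alpha.\<close>
definition cf_expansion_1 :: "real \<Rightarrow> (nat \<Rightarrow> nat) \<Rightarrow> bool" where
  "cf_expansion_1 x a \<longleftrightarrow> (\<forall>i\<ge>1. a i \<ge> 1) \<and>
     (\<lambda>n. cfrac_list (1 # map a [1..<Suc n])) \<longlonglongrightarrow> x"

definition D_alpha :: "real \<Rightarrow> real set" where
  "D_alpha \<alpha> = (\<Union>n\<in>{1::nat..}. {1 / (real n + \<alpha>) .. 1 / real n})"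

definition Dc_alpha :: "real \<Rightarrow> real set" where
  "Dc_alpha \<alpha> = {0..1} - D_alpha \<alpha>"

definition I_alpha :: "real \<Rightarrow> real set" where
  "I_alpha \<alpha> = {min \<alpha> (1 - \<alpha>) .. 1}"

definition T_alpha :: "real \<Rightarrow> real \<Rightarrow> real" where
  "T_alpha \<alpha> x = (if x \<in> D_alpha \<alpha> then 1 + real_of_int \<lfloor>1 / x\<rfloor> - 1 / x
                    else 1 / x - real_of_int \<lfloor>1 / x\<rfloor>)"

end

theory Submission
  imports Defs
begin


lemma L0:
  fixes \<alpha> u :: real and n :: nat
  assumes a0: "0 < \<alpha>" and a1: "\<alpha> < 1" and n1: "1 \<le> n" and u0: "0 \<le> u" and u1: "u < 1"
  shows "1/(real n + u) \<in> D_alpha \<alpha> \<longleftrightarrow> u \<le> \<alpha>"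
    and "1/(real n + u) \<in> Dc_alpha \<alpha> \<longleftrightarrow> \<alpha> < u"
    and "u \<le> \<alpha> \<Longrightarrow> T_alpha \<alpha> (1/(real n + u)) = 1 - u"
proof -
  have npos: "real n \<ge> 1" using n1 by simp
  have fl: "\<lfloor>1/(1/(real n + u))\<rfloor> = int n"
    using npos u0 u1 by (simp add: floor_eq_iff)
  show D: "1/(real n + u) \<in> D_alpha \<alpha> \<longleftrightarrow> u \<le> \<alpha>"
  proof
    assume "1/(real n + u) \<in> D_alpha \<alpha>"
    then obtain m :: nat where m1: "1 \<le> m" and l: "1/(real m + \<alpha>) \<le> 1/(real n + u)"
      and r: "1/(real n + u) \<le> 1/real m"
      unfolding D_alpha_def by auto
    have mpos: "real m \<ge> 1" using m1 by simp
    have A: "real n + u \<le> real m + \<alpha>"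
    proof -
      have "inverse (real m + \<alpha>) \<le> inverse (real n + u)" using l by (simp add: inverse_eq_divide)
      then show ?thesis using npos u0 mpos a0 by (subst (asm) inverse_le_iff_le) auto
    qed
    have B: "real m \<le> real n + u"
    proof -
      have "inverse (real n + u) \<le> inverse (real m)" using r by (simp add: inverse_eq_divide)
      then show ?thesis using npos u0 mpos a0 by (subst (asm) inverse_le_iff_le) auto
    qed
    have "m \<le> n" using B u1 by linarith
    moreover have "n \<le> m" using A a1 u0 by linarith
    ultimately have "m = n" by simp
    then show "u \<le> \<alpha>" using A by simp
  next
    assume "u \<le> \<alpha>"
    then have "1/(real n + \<alpha>) \<le> 1/(real n + u) \<and> 1/(real n + u) \<le> 1/real n"
      using npos u0 by (simp add: frac_le)
    then show "1/(real n + u) \<in> D_alpha \<alpha>"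
      unfolding D_alpha_def using n1 by auto
  qed
  have "0 \<le> 1/(real n + u)" "1/(real n + u) \<le> 1" using npos u0 by auto
  then show "1/(real n + u) \<in> Dc_alpha \<alpha> \<longleftrightarrow> \<alpha> < u"
    unfolding Dc_alpha_def using D by auto
  show "u \<le> \<alpha> \<Longrightarrow> T_alpha \<alpha> (1/(real n + u)) = 1 - u"
    unfolding T_alpha_def using D fl by simp
qed




definition X :: "nat \<Rightarrow> real \<Rightarrow> real" where "X b t = 1 - 1/(real b + t)"

definition good :: "real \<Rightarrow> (nat \<Rightarrow> nat) \<Rightarrow> (nat \<Rightarrow> real) \<Rightarrow> bool" where
  "good \<alpha> a \<theta> \<longleftrightarrow> 1/2 < \<alpha> \<and> \<alpha> < 1 \<and> \<theta> 0 = \<alpha> \<and>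
     (\<forall>k. 1 \<le> a k \<and> 0 < \<theta> k \<and> \<theta> k < 1 \<and> \<theta> k = 1/(real (a k) + \<theta> (Suc k)))"

lemma X_alt: "2 \<le> b \<Longrightarrow> 0 < t \<Longrightarrow> X b t = 1/(real 1 + 1/(real (b-1) + t))"
proof -
  assume b: "2 \<le> b" and t: "0 < t"
  have r: "real (b-1) = real b - 1" using b by simp
  have p: "real b - 1 + t > 0" using b t by simp
  show ?thesis unfolding X_def r using p b t by (simp add: field_simps)
qed

lemma Xu:
  assumes "1/2 < \<alpha>" "\<alpha> < 1" "2 \<le> b" "0 < t" "t < 1"
  shows "X b t \<in> Dc_alpha \<alpha> \<longleftrightarrow> \<alpha> < 1/(real (b-1) + t)"
    and "1/(real (b-1) + t) \<le> \<alpha> \<Longrightarrow> T_alpha \<alpha> (X b t) = X (b-1) t"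
proof -
  have g1: "1 < real (b-1) + t" using assms by simp
  have u0: "0 \<le> 1/(real (b-1) + t)" "1/(real (b-1) + t) < 1" using g1 by auto
  have n1: "1 \<le> (1::nat)" by simp
  have a0: "0 < \<alpha>" using assms by simp
  have e: "X b t = 1/(real 1 + 1/(real (b-1) + t))" using X_alt assms by simp
  show "X b t \<in> Dc_alpha \<alpha> \<longleftrightarrow> \<alpha> < 1/(real (b-1) + t)"
    unfolding e by (rule L0(2)[OF a0 assms(2) n1 u0])
  assume "1/(real (b-1) + t) \<le> \<alpha>"
  then have "T_alpha \<alpha> (X b t) = 1 - 1/(real (b-1) + t)"
    unfolding e by (rule L0(3)[OF a0 assms(2) n1 u0])
  then show "T_alpha \<alpha> (X b t) = X (b-1) t" by (simp add: X_def)
qed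

lemma S1:
  assumes "1/2 < \<alpha>" "\<alpha> < 1" "2 \<le> b" "0 < t" "t < 1" "X b t \<notin> Dc_alpha \<alpha>"
  shows "T_alpha \<alpha> (X b t) = X (b-1) t"
  using Xu[OF assms(1-5)] assms(6) by linarith

lemma S1':
  assumes "1/2 < \<alpha>" "\<alpha> < 1" "3 \<le> b" "0 < t" "t < 1"
  shows "X b t \<notin> Dc_alpha \<alpha>"
proof -
  have g1: "2 < real (b-1) + t" using assms by simp
  have "1/(real (b-1) + t) < 1/2" using g1 by (simp add: field_simps)
  then have "\<not> \<alpha> < 1/(real (b-1) + t)" using assms(1) by linarith
  then show ?thesis using Xu(1)[of \<alpha> b t] assms by simp
qed




lemma goodD:
  assumes "good \<alpha> a \<theta>"
  shows "1/2 < \<alpha>" "\<alpha> < 1" "0 < \<alpha>" "\<theta> 0 = \<alpha>" "1 \<le> a k" "0 < \<theta> k" "\<theta> k < 1"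
    "\<theta> k = 1/(real (a k) + \<theta> (Suc k))"
  using assms unfolding good_def by (blast, blast, linarith, blast, blast, blast, blast, blast)

lemma X1_alt:
  assumes "good \<alpha> a \<theta>"
  shows "X 1 (\<theta> k) = 1/(real (1 + a k) + \<theta> (Suc k))"
proof -
  have r: "\<theta> k = 1/(real (a k) + \<theta> (Suc k))" "0 < \<theta> (Suc k)" "1 \<le> a k"
    using goodD[OF assms] by blast+
  then have p: "0 < real (a k) + \<theta> (Suc k)" by linarith
  have "X 1 (\<theta> k) = 1 - 1/(1 + 1/(real (a k) + \<theta> (Suc k)))" unfolding X_def r(1) by simp
  also have "\<dots> = 1/(real (a k) + \<theta> (Suc k) + 1)" using p by (simp add: field_simps)
  finally show ?thesis by simp
qed

lemma S2:
  assumes g: "good \<alpha> a \<theta>"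
  shows "X 1 (\<theta> k) \<notin> Dc_alpha \<alpha> \<Longrightarrow> T_alpha \<alpha> (X 1 (\<theta> k)) = X (a (Suc k)) (\<theta> (Suc (Suc k)))"
    and "X 1 (\<theta> k) \<in> Dc_alpha \<alpha> \<Longrightarrow> a (Suc k) = 1"
proof -
  have al: "1/2 < \<alpha>" "\<alpha> < 1" "0 < \<alpha>" using goodD[OF g] by blast+
  have th: "0 < \<theta> (Suc k)" "\<theta> (Suc k) < 1" "\<theta> (Suc k) = 1/(real (a (Suc k)) + \<theta> (Suc (Suc k)))"
     "0 < \<theta> (Suc (Suc k))" "1 \<le> a (Suc k)"
    using goodD[OF g] by blast+
  have n1: "1 \<le> 1 + a k" by simp
  have u0: "0 \<le> \<theta> (Suc k)" using th by simp
  have e: "X 1 (\<theta> k) = 1/(real (1 + a k) + \<theta> (Suc k))" by (rule X1_alt[OF g])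
  have D: "X 1 (\<theta> k) \<in> Dc_alpha \<alpha> \<longleftrightarrow> \<alpha> < \<theta> (Suc k)"
    unfolding e by (rule L0(2)[OF al(3) al(2) n1 u0 th(2)])
  show "X 1 (\<theta> k) \<notin> Dc_alpha \<alpha> \<Longrightarrow> T_alpha \<alpha> (X 1 (\<theta> k)) = X (a (Suc k)) (\<theta> (Suc (Suc k)))"
  proof -
    assume "X 1 (\<theta> k) \<notin> Dc_alpha \<alpha>"
    then have "\<theta> (Suc k) \<le> \<alpha>" using D by linarith
    then have "T_alpha \<alpha> (X 1 (\<theta> k)) = 1 - \<theta> (Suc k)"
      unfolding e by (rule L0(3)[OF al(3) al(2) n1 u0 th(2)])
    then show ?thesis using th(3) by (simp add: X_def)
  qed
  show "X 1 (\<theta> k) \<in> Dc_alpha \<alpha> \<Longrightarrow> a (Suc k) = 1"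
  proof (rule ccontr)
    assume "X 1 (\<theta> k) \<in> Dc_alpha \<alpha>" "a (Suc k) \<noteq> 1"
    then have c: "\<alpha> < \<theta> (Suc k)" "2 \<le> a (Suc k)" using D th(5) by auto
    have "2 \<le> real (a (Suc k)) + \<theta> (Suc (Suc k))" using c(2) th(4) by linarith
    then have "1/(real (a (Suc k)) + \<theta> (Suc (Suc k))) \<le> 1/2" using frac_le[of 1 1 2] by simp
    then have "\<theta> (Suc k) \<le> 1/2" using th(3) by simp
    then show False using al c by linarith
  qed
qed




lemma decomp:
  fixes U c :: "nat \<Rightarrow> nat"
  assumes U0: "U 0 = 0" and US: "\<And>j. U (Suc j) = U j + c j" and c1: "\<And>j. 1 \<le> c j"
  shows "\<exists>j r. Suc n = U j + r \<and> 1 \<le> r \<and> r \<le> c j"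
proof (induction n)
  case 0 show ?case using U0 c1[of 0] by (intro exI[of _ 0] exI[of _ 1]) auto
next
  case (Suc n)
  then obtain j r where h: "Suc n = U j + r" "1 \<le> r" "r \<le> c j" by blast
  show ?case
  proof (cases "r < c j")
    case True then show ?thesis using h by (intro exI[of _ j] exI[of _ "Suc r"]) auto
  next
    case False then show ?thesis using h US[of j] c1[of "Suc j"]
      by (intro exI[of _ "Suc j"] exI[of _ 1]) auto
  qed
qed

lemma orbit:
  assumes g: "good \<alpha> a \<theta>"
    and x0D: "x0 \<notin> Dc_alpha \<alpha> \<Longrightarrow> T_alpha \<alpha> x0 = X (a q) (\<theta> (Suc q))"
    and x0C: "x0 \<in> Dc_alpha \<alpha> \<Longrightarrow> a q = 1"
    and nD: "\<forall>i<n. (T_alpha \<alpha> ^^ i) x0 \<notin> Dc_alpha \<alpha>"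
    and nC: "(T_alpha \<alpha> ^^ n) x0 \<in> Dc_alpha \<alpha>"
  shows "\<exists>j. Suc n = (\<Sum>i<Suc j. a (2*i+q))"
proof -
  define U where "U j = (\<Sum>i<j. a (2*i+q))" for j
  note al = goodD(1,2)[OF g]
  have a1: "1 \<le> a k" for k using goodD(5)[OF g] .
  have th: "0 < \<theta> k" "\<theta> k < 1" for k using goodD(6,7)[OF g] by auto
  have U0: "U 0 = 0" and US: "U (Suc j) = U j + a (2*j+q)" for j by (simp_all add: U_def)
  have block: "(\<forall>i<U j + r. (T_alpha \<alpha> ^^ i) x0 \<notin> Dc_alpha \<alpha>) \<longrightarrow> (T_alpha \<alpha> ^^ (U j + r)) x0 = X (a (2*j+q) + 1 - r) (\<theta> (Suc (2*j+q)))"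
    if r1: "1 \<le> r" and rA: "r \<le> a (2*j+q)"
    and base: "(\<forall>i<Suc (U j). (T_alpha \<alpha> ^^ i) x0 \<notin> Dc_alpha \<alpha>) \<Longrightarrow> (T_alpha \<alpha> ^^ Suc (U j)) x0 = X (a (2*j+q)) (\<theta> (Suc (2*j+q)))"
    for j r
    using r1 rA
  proof (induction r rule: dec_induct)
    case base then show ?case using that(3) by simp
  next
    case (step r)
    show ?case
    proof
      assume nd: "\<forall>i<U j + Suc r. (T_alpha \<alpha> ^^ i) x0 \<notin> Dc_alpha \<alpha>"
      then have e: "(T_alpha \<alpha> ^^ (U j + r)) x0 = X (a (2*j+q) + 1 - r) (\<theta> (Suc (2*j+q)))"
        using step by auto
      have "(T_alpha \<alpha> ^^ (U j + r)) x0 \<notin> Dc_alpha \<alpha>" using nd by auto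
      then have nin: "X (a (2*j+q) + 1 - r) (\<theta> (Suc (2*j+q))) \<notin> Dc_alpha \<alpha>" using e by simp
      have two: "2 \<le> a (2*j+q) + 1 - r" using step by linarith
      have "T_alpha \<alpha> (X (a (2*j+q) + 1 - r) (\<theta> (Suc (2*j+q)))) = X (a (2*j+q) + 1 - r - 1) (\<theta> (Suc (2*j+q)))"
        by (rule S1[OF al two th nin])
      moreover have "a (2*j+q) + 1 - r - 1 = a (2*j+q) + 1 - Suc r" by simp
      ultimately show "(T_alpha \<alpha> ^^ (U j + Suc r)) x0 = X (a (2*j+q) + 1 - Suc r) (\<theta> (Suc (2*j+q)))"
        using e by simp
    qed
  qed
  have C: "\<And>r. 1 \<le> r \<Longrightarrow> r \<le> a (2*j+q) \<Longrightarrow> (\<forall>i<U j + r. (T_alpha \<alpha> ^^ i) x0 \<notin> Dc_alpha \<alpha>) \<Longrightarrow> (T_alpha \<alpha> ^^ (U j + r)) x0 = X (a (2*j+q) + 1 - r) (\<theta> (Suc (2*j+q)))" for j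
  proof (induction j)
    case 0
    have "(T_alpha \<alpha> ^^ Suc (U 0)) x0 = X (a (2*0+q)) (\<theta> (Suc (2*0+q)))"
      if "\<forall>i<Suc (U 0). (T_alpha \<alpha> ^^ i) x0 \<notin> Dc_alpha \<alpha>"
      using that x0D U0 by auto
    then show ?case using block[of r 0] 0 by blast
  next
    case (Suc j)
    have "(T_alpha \<alpha> ^^ Suc (U (Suc j))) x0 = X (a (2*Suc j+q)) (\<theta> (Suc (2*Suc j+q)))"
      if nd: "\<forall>i<Suc (U (Suc j)). (T_alpha \<alpha> ^^ i) x0 \<notin> Dc_alpha \<alpha>"
    proof -
      have "(T_alpha \<alpha> ^^ (U j + a (2*j+q))) x0 = X (a (2*j+q) + 1 - a (2*j+q)) (\<theta> (Suc (2*j+q)))"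
        using Suc.IH[of "a (2*j+q)"] a1 nd US[of j] by auto
      then have e: "(T_alpha \<alpha> ^^ U (Suc j)) x0 = X 1 (\<theta> (Suc (2*j+q)))" using US[of j] by simp
      have "(T_alpha \<alpha> ^^ U (Suc j)) x0 \<notin> Dc_alpha \<alpha>" using nd by auto
      then have "T_alpha \<alpha> (X 1 (\<theta> (Suc (2*j+q)))) = X (a (Suc (Suc (2*j+q)))) (\<theta> (Suc (Suc (Suc (2*j+q)))))"
        unfolding e by (rule S2(1)[OF g])
      then show ?thesis using e by simp
    qed
    then show ?case using block[of r "Suc j"] Suc.prems by blast
  qed
  show ?thesis
  proof (cases n)
    case 0
    then have "a q = 1" using x0C nC by simp
    then show ?thesis using 0 by (intro exI[of _ 0]) simp
  next
    case (Suc n')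
    obtain j r where jr: "Suc n' = U j + r" "1 \<le> r" "r \<le> a (2*j+q)"
      using decomp[OF U0 US a1] by blast
    have nn: "n = U j + r" using jr Suc by simp
    have st: "(T_alpha \<alpha> ^^ n) x0 = X (a (2*j+q) + 1 - r) (\<theta> (Suc (2*j+q)))"
      using C[OF jr(2,3)] nD nn by simp
    have inC: "X (a (2*j+q) + 1 - r) (\<theta> (Suc (2*j+q))) \<in> Dc_alpha \<alpha>" using st nC by simp
    have "\<not> 3 \<le> a (2*j+q) + 1 - r"
      using inC S1'[OF al, of _ "\<theta> (Suc (2*j+q))"] th by blast
    then consider "a (2*j+q) + 1 - r = 2" | "a (2*j+q) + 1 - r = 1" using jr by linarith
    then show ?thesis
    proof cases
      case 1
      then have "Suc n = U (Suc j)" using nn US[of j] jr by simp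
      then show ?thesis unfolding U_def by blast
    next
      case 2
      then have "X 1 (\<theta> (Suc (2*j+q))) \<in> Dc_alpha \<alpha>" using inC by simp
      then have "a (Suc (Suc (2*j+q))) = 1" by (rule S2(2)[OF g])
      then have "Suc n = U (Suc (Suc j))" using nn US[of j] US[of "Suc j"] jr 2 by simp
      then show ?thesis unfolding U_def by blast
    qed
  qed
qed




lemma cfrac_bounds: "(\<forall>x\<in>set xs. 1 \<le> x) \<Longrightarrow> 0 \<le> cfrac_list xs \<and> cfrac_list xs \<le> 1"
proof (induction xs)
  case Nil then show ?case by simp
next
  case (Cons b xs)
  then have "1 \<le> b" "0 \<le> cfrac_list xs" by auto
  then show ?case by simp
qed

lemma theta_exists:
  fixes b :: "nat \<Rightarrow> nat" and x :: real
  assumes b1: "\<forall>i. 1 \<le> b i" and lim: "(\<lambda>n. cfrac_list (map b [0..<n])) \<longlonglongrightarrow> x"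
  shows "\<exists>\<theta>. \<theta> 0 = x \<and> (\<forall>k. 0 < \<theta> k \<and> \<theta> k < 1 \<and> \<theta> k = 1/(real (b k) + \<theta> (Suc k)))"
proof -
  define \<theta> where "\<theta> = rec_nat x (\<lambda>k t. 1/t - real (b k))"
  have \<theta>0: "\<theta> 0 = x" and \<theta>S: "\<And>k. \<theta> (Suc k) = 1/\<theta> k - real (b k)" by (simp_all add: \<theta>_def)
  define g where "g k n = cfrac_list (map b [k..<n])" for k n
  have bk: "1 \<le> real (b k)" for k using b1 by (simp add: Suc_le_eq)
  have gb: "0 \<le> g k n \<and> g k n \<le> 1" for k n using cfrac_bounds b1 by (simp add: g_def)
  have gev: "eventually (\<lambda>n. g k n = 1/(real (b k) + g (Suc k) n)) sequentially" for k
    using eventually_gt_at_top[of k] by eventually_elim (simp add: g_def upt_conv_Cons)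
  have glow: "eventually (\<lambda>n. 1/(real (b k)+1) \<le> g k n) sequentially" for k
    using gev[of k]
  proof eventually_elim
    case (elim n)
    have "real (b k) + g (Suc k) n \<le> real (b k) + 1" "0 < real (b k) + g (Suc k) n"
      using gb[of "Suc k" n] bk[of k] by linarith+
    then show ?case using elim by (simp add: frac_le)
  qed
  have bpos: "0 < 1/(real (b k)+1)" for k by simp
  have conv: "g k \<longlonglongrightarrow> \<theta> k" for k
  proof (induction k)
    case 0 show ?case using lim by (simp add: g_def \<theta>0)
  next
    case (Suc k)
    have "1/(real (b k)+1) \<le> \<theta> k" using tendsto_lowerbound[OF Suc.IH glow] by simp
    then have nz: "\<theta> k \<noteq> 0" using bpos[of k] by linarith
    have "(\<lambda>n. 1/g k n - real (b k)) \<longlonglongrightarrow> 1/\<theta> k - real (b k)"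
      by (intro tendsto_intros Suc.IH nz)
    moreover have "eventually (\<lambda>n. 1/g k n - real (b k) = g (Suc k) n) sequentially"
      using gev[of k]
    proof eventually_elim
      case (elim n)
      have "0 < real (b k) + g (Suc k) n" using gb[of "Suc k" n] bk[of k] by linarith
      then show ?case using elim by simp
    qed
    ultimately show ?case using Lim_transform_eventually \<theta>S by fastforce
  qed
  have low: "1/(real (b k)+1) \<le> \<theta> k" for k using tendsto_lowerbound[OF conv glow] by simp
  have up: "\<theta> k \<le> 1" for k by (rule tendsto_upperbound[OF conv[of k]]) (use gb in \<open>auto simp: always_eventually\<close>)
  have pos: "0 < \<theta> k" for k using low[of k] bpos[of k] by linarith
  have rec: "\<theta> k = 1/(real (b k) + \<theta> (Suc k))" for k
    using \<theta>S[of k] pos[of k] by simp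
  have lt1: "\<theta> k < 1" for k
  proof -
    have "1 < real (b k) + \<theta> (Suc k)" using pos[of "Suc k"] bk[of k] by linarith
    then show ?thesis using rec[of k] by simp
  qed
  show ?thesis using \<theta>0 pos lt1 rec by blast
qed




lemma fin:
  fixes c :: "nat \<Rightarrow> nat" and m j0 :: nat
  assumes c1: "\<And>i. 1 \<le> c i" and ex: "Suc m = (\<Sum>i<Suc j0. c i)"
  defines "P \<equiv> (\<lambda>j. int (\<Sum>i<j. c i) - 1 < int m \<and> int m \<le> int (\<Sum>i<Suc j. c i) - 1)"
  shows "P j0" and "\<And>j. P j \<Longrightarrow> j = j0"
proof -
  define S where "S j = (\<Sum>i<j. c i)" for j
  have SS: "S (Suc j) = S j + c j" for j by (simp add: S_def)
  have sm: "strict_mono S" unfolding strict_mono_Suc_iff using SS c1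
    by (metis add_diff_cancel_left' diff_is_0_eq' less_Suc_eq_le not_less_eq_eq zero_less_one_class.zero_le_one le_antisym one_neq_zero le_neq_implies_less le_add1)
  have ex': "Suc m = S (Suc j0)" using ex by (simp add: S_def)
  have P': "P j = (int (S j) - 1 < int m \<and> int m \<le> int (S (Suc j)) - 1)" for j
    by (simp add: P_def S_def)
  show "P j0" unfolding P' using ex' SS[of j0] c1[of j0] by simp
  fix j assume "P j"
  then have h: "int (S j) - 1 < int m" "int m \<le> int (S (Suc j)) - 1" unfolding P' by auto
  show "j = j0"
  proof (rule ccontr)
    assume "j \<noteq> j0"
    then consider "Suc j \<le> j0" | "Suc j0 \<le> j" by linarith
    then show False
    proof cases
      case 1
      then have "S (Suc j) \<le> S j0" using sm strict_mono_less_eq by blast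
      moreover have "S j0 < S (Suc j0)" using sm strict_mono_less by blast
      ultimately show False using h ex' by linarith
    next
      case 2
      then have "S (Suc j0) \<le> S j" using sm strict_mono_less_eq by blast
      then show False using h ex' by linarith
    qed
  qed
qed

lemma sum_shift2: "(\<Sum>i\<in>{1..j}. f (2*i)) = (\<Sum>i<j. f (2*i+2::nat))"
  by (induction j) (simp_all add: atLeastAtMostSuc_conv add.commute)

theorem lemma3p4:
  fixes \<alpha> :: real and a :: "nat \<Rightarrow> nat"
  assumes "1/2 < \<alpha>" and "\<alpha> < 1"
    and "cf_expansion_1 \<alpha> a"
  shows "((\<exists>i. (T_alpha \<alpha> ^^ i) \<alpha> \<in> Dc_alpha \<alpha>) \<longrightarrow>
           (let m = (LEAST i. (T_alpha \<alpha> ^^ i) \<alpha> \<in> Dc_alpha \<alpha>);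
                P = (\<lambda>j::nat. int (\<Sum>i<j. a (2*i+1)) - 1 < int m \<and>
                              int m \<le> int (\<Sum>i<Suc j. a (2*i+1)) - 1)
            in (\<exists>!j. P j) \<and> (\<forall>j. P j \<longrightarrow> int m = int (\<Sum>i<Suc j. a (2*i+1)) - 1)))
       \<and> ((\<exists>i. (T_alpha \<alpha> ^^ i) (1 - \<alpha>) \<in> Dc_alpha \<alpha>) \<longrightarrow>
           (let k = (LEAST i. (T_alpha \<alpha> ^^ i) (1 - \<alpha>) \<in> Dc_alpha \<alpha>);
                Q = (\<lambda>j::nat. 1 \<le> j \<and> int (\<Sum>i\<in>{1..<j}. a (2*i)) - 1 < int k \<and>
                              int k \<le> int (\<Sum>i\<in>{1..j}. a (2*i)) - 1)
            in (\<exists>!j. Q j) \<and> (\<forall>j. Q j \<longrightarrow> int k = int (\<Sum>i\<in>{1..j}. a (2*i)) - 1)))"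
proof -
  define a' where "a' k = (if k = 0 then 1 else a k)" for k
  have ai: "\<forall>i\<ge>1. 1 \<le> a i" and lim: "(\<lambda>n. cfrac_list (1 # map a [1..<Suc n])) \<longlonglongrightarrow> \<alpha>"
    using assms(3) unfolding cf_expansion_1_def by auto
  have a'1: "\<forall>i. 1 \<le> a' i" using ai by (simp add: a'_def)
  have "cfrac_list (map a' [0..<Suc n]) = cfrac_list (1 # map a [1..<Suc n])" for n
  proof -
    have "map a' [1..<Suc n] = map a [1..<Suc n]" by (simp add: a'_def)
    moreover have e1: "[0..<Suc n] = 0 # [1..<Suc n]" by (simp only: upt_conv_Cons[of 0 "Suc n", OF zero_less_Suc] One_nat_def)
    moreover have "a' 0 = 1" by (simp add: a'_def)
    ultimately show ?thesis by (simp only: list.map)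
  qed
  then have "(\<lambda>n. cfrac_list (map a' [0..<Suc n])) \<longlonglongrightarrow> \<alpha>" using lim by simp
  then have "(\<lambda>n. cfrac_list (map a' [0..<n])) \<longlonglongrightarrow> \<alpha>" by (rule LIMSEQ_imp_Suc)
  then obtain \<theta> where th: "\<theta> 0 = \<alpha>" "\<forall>k. 0 < \<theta> k \<and> \<theta> k < 1 \<and> \<theta> k = 1/(real (a' k) + \<theta> (Suc k))"
    using theta_exists[OF a'1] by blast
  have g: "good \<alpha> a' \<theta>" unfolding good_def using th a'1 assms(1,2) by blast
  note al = goodD(1,2,3)[OF g]
  have t1: "0 < \<theta> 1" "\<theta> 1 < 1" "\<theta> 1 = 1/(real (a' 1) + \<theta> 2)" "0 < \<theta> 2"
    using goodD(6,7,8)[OF g, of 1] goodD(6)[OF g, of 2] by (simp_all add: numeral_2_eq_2)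
  have t0: "\<alpha> = 1/(real 1 + \<theta> 1)" using goodD(4)[OF g] goodD(8)[OF g, of 0] by (simp add: a'_def)
  have n1: "1 \<le> (1::nat)" by simp
  have u0: "0 \<le> \<theta> 1" using t1 by simp
  have aC: "\<alpha> \<in> Dc_alpha \<alpha> \<longleftrightarrow> \<alpha> < \<theta> 1"
    by (subst (1) t0) (rule L0(2)[OF al(3) al(2) n1 u0 t1(2)])
  have x0D1: "T_alpha \<alpha> \<alpha> = X (a' 1) (\<theta> (Suc 1))" if "\<alpha> \<notin> Dc_alpha \<alpha>"
  proof -
    have "\<theta> 1 \<le> \<alpha>" using that aC by linarith
    then have "T_alpha \<alpha> (1/(real 1 + \<theta> 1)) = 1 - \<theta> 1" by (rule L0(3)[OF al(3) al(2) n1 u0 t1(2)])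
    then show ?thesis using t0 t1(3) by (simp add: X_def numeral_2_eq_2)
  qed
  have x0C1: "a' 1 = 1" if "\<alpha> \<in> Dc_alpha \<alpha>"
  proof (rule ccontr)
    assume "a' 1 \<noteq> 1"
    then have c: "2 \<le> a' 1" using a'1 by (metis le_antisym not_less_eq_eq one_add_one plus_1_eq_Suc)
    have "2 \<le> real (a' 1) + \<theta> 2" using c t1(4) by linarith
    then have "1/(real (a' 1) + \<theta> 2) \<le> 1/2" using frac_le[of 1 1 2] by simp
    then have "\<theta> 1 \<le> 1/2" using t1(3) by simp
    then show False using that aC al by linarith
  qed
  have omx: "1 - \<alpha> = X 1 (\<theta> 1)"
  proof -
    have "1 + \<theta> 1 > 0" using t1(1) by linarith
    then show ?thesis unfolding X_def t0 by (simp add: field_simps)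
  qed
  have x0D2: "T_alpha \<alpha> (1 - \<alpha>) = X (a' 2) (\<theta> (Suc 2))" if "1 - \<alpha> \<notin> Dc_alpha \<alpha>"
    using S2(1)[OF g, of 1] that unfolding omx by (simp add: numeral_2_eq_2 numeral_3_eq_3)
  have x0C2: "a' 2 = 1" if "1 - \<alpha> \<in> Dc_alpha \<alpha>"
    using S2(2)[OF g, of 1] that unfolding omx by (simp add: numeral_2_eq_2)
  show ?thesis
  proof (intro conjI impI)
    assume ex: "\<exists>i. (T_alpha \<alpha> ^^ i) \<alpha> \<in> Dc_alpha \<alpha>"
    define m where "m = (LEAST i. (T_alpha \<alpha> ^^ i) \<alpha> \<in> Dc_alpha \<alpha>)"
    have mC: "(T_alpha \<alpha> ^^ m) \<alpha> \<in> Dc_alpha \<alpha>" unfolding m_def by (rule LeastI_ex[OF ex])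
    have mD: "\<forall>i<m. (T_alpha \<alpha> ^^ i) \<alpha> \<notin> Dc_alpha \<alpha>" unfolding m_def using not_less_Least by blast
    obtain j0 where j0: "Suc m = (\<Sum>i<Suc j0. a' (2*i+1))"
      using orbit[OF g x0D1 x0C1 mD mC] by blast
    have j0': "Suc m = (\<Sum>i<Suc j0. a (2*i+1))" using j0 by (simp add: a'_def)
    have c1: "1 \<le> a (2*i+1)" for i using ai by simp
    note F = fin[OF c1 j0']
    show "let m = (LEAST i. (T_alpha \<alpha> ^^ i) \<alpha> \<in> Dc_alpha \<alpha>);
                P = (\<lambda>j::nat. int (\<Sum>i<j. a (2*i+1)) - 1 < int m \<and>
                              int m \<le> int (\<Sum>i<Suc j. a (2*i+1)) - 1)
            in (\<exists>!j. P j) \<and> (\<forall>j. P j \<longrightarrow> int m = int (\<Sum>i<Suc j. a (2*i+1)) - 1)"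
      unfolding Let_def m_def[symmetric]
    proof (intro conjI allI impI)
      show "\<exists>!j. int (\<Sum>i<j. a (2*i+1)) - 1 < int m \<and> int m \<le> int (\<Sum>i<Suc j. a (2*i+1)) - 1"
        using F by blast
      fix j assume "int (\<Sum>i<j. a (2*i+1)) - 1 < int m \<and> int m \<le> int (\<Sum>i<Suc j. a (2*i+1)) - 1"
      then have "j = j0" using F(2) by blast
      then have e: "(\<Sum>i<Suc j. a (2*i+1)) = Suc m" using j0' by simp
      show "int m = int (\<Sum>i<Suc j. a (2*i+1)) - 1" by (simp only: e)
    qed
  next
    assume ex: "\<exists>i. (T_alpha \<alpha> ^^ i) (1 - \<alpha>) \<in> Dc_alpha \<alpha>"
    define k where "k = (LEAST i. (T_alpha \<alpha> ^^ i) (1 - \<alpha>) \<in> Dc_alpha \<alpha>)"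
    have kC: "(T_alpha \<alpha> ^^ k) (1 - \<alpha>) \<in> Dc_alpha \<alpha>" unfolding k_def by (rule LeastI_ex[OF ex])
    have kD: "\<forall>i<k. (T_alpha \<alpha> ^^ i) (1 - \<alpha>) \<notin> Dc_alpha \<alpha>" unfolding k_def using not_less_Least by blast
    obtain j0 where j0: "Suc k = (\<Sum>i<Suc j0. a' (2*i+2))"
      using orbit[OF g x0D2 x0C2 kD kC] by blast
    have j0': "Suc k = (\<Sum>i<Suc j0. a (2*i+2))" using j0 by (simp add: a'_def)
    have c1: "1 \<le> a (2*i+2)" for i using ai by simp
    note F = fin[OF c1 j0']
    have s1: "(\<Sum>i\<in>{1..j}. a (2*i)) = (\<Sum>i<j. a (2*i+2))" for j by (rule sum_shift2)
    have s2: "(\<Sum>i\<in>{1..<Suc j}. a (2*i)) = (\<Sum>i<j. a (2*i+2))" for j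
      using s1[of j] by (simp add: atLeastLessThanSuc_atLeastAtMost)
    define Q where "Q = (\<lambda>j::nat. 1 \<le> j \<and> int (\<Sum>i\<in>{1..<j}. a (2*i)) - 1 < int k \<and>
                              int k \<le> int (\<Sum>i\<in>{1..j}. a (2*i)) - 1)"
    have QS: "Q j \<longleftrightarrow> (\<exists>j'. j = Suc j' \<and> int (\<Sum>i<j'. a (2*i+2)) - 1 < int k \<and> int k \<le> int (\<Sum>i<Suc j'. a (2*i+2)) - 1)" for j
    proof (cases j)
      case 0 then show ?thesis by (simp add: Q_def)
    next
      case (Suc j') then show ?thesis unfolding Q_def Suc s2 s1 by simp
    qed
    have Qj0: "Q (Suc j0)" using QS F(1) by blast
    have Quniq: "Q j \<Longrightarrow> j = Suc j0" for j using QS F(2) by blast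
    have Qval: "int k = int (\<Sum>i\<in>{1..j}. a (2*i)) - 1" if "Q j" for j
    proof -
      have "j = Suc j0" using Quniq that by blast
      then have e: "(\<Sum>i\<in>{1..j}. a (2*i)) = Suc k" using j0' s1[of "Suc j0"] by simp
      show ?thesis by (simp only: e)
    qed
    show "let k = (LEAST i. (T_alpha \<alpha> ^^ i) (1 - \<alpha>) \<in> Dc_alpha \<alpha>);
                Q = (\<lambda>j::nat. 1 \<le> j \<and> int (\<Sum>i\<in>{1..<j}. a (2*i)) - 1 < int k \<and>
                              int k \<le> int (\<Sum>i\<in>{1..j}. a (2*i)) - 1)
            in (\<exists>!j. Q j) \<and> (\<forall>j. Q j \<longrightarrow> int k = int (\<Sum>i\<in>{1..j}. a (2*i)) - 1)"
      unfolding Let_def k_def[symmetric] using Qj0 Quniq Qval unfolding Q_def by blast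
  qed
qed

end
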